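(* Let $X$ be a nonempty set, $G\le S_X$, $\Lambda=(\lambda_x\in G:x\in X/G)$, and consider $(X,* )=\mathbf R(G,\Lambda)$. Then: (i) $(X,* )$ is well-defined if and only if $(G,\Lambda)$ is a rack folder, in which case $(X,* )$ is a rack satisfying $L_x=\lambda_x$ for every $x\in X/G$ and $\mathrm{LMlt}(X,* )=\langle\bigcup_{x\in X/G}\lambda_x^G\rangle\le G$; (ii) $(X,* )$ is a well-defined quandle if and only if $(G,\Lambda)$ is a quandle folder.
   Context: Permutations act on the right ($xf$ is the image of $x$ under $f$; $fg$ means $f$ first, then $g$); $g^f=f^{-1}gf$, $f^G=\{f^g:g\in G\}$. For $G\le S_X$, $xG$ is the orbit of $x$, $G_x$ its stabilizer, $X/G$ a fixed complete set of orbit representatives; $C_G(H)$ is the centralizer, $Z(H)$ the center. A left quasigroup is a groupoid $(X,* )$ whose left translations $L_x$ ($yL_x=x*y$) are bijections; a rack is a left quasigroup with $x*(y*z)=(x*y)*(x*z)$; a quandle is a rack with $x*x=x$; $\mathrm{LMlt}(X,* )=\langle L_x:x\in X\rangle$. A pair $(G,(\lambda_x:x\in X/G))$ is a rack folder (resp. quandle folder) if $\lambda_x\in C_G(G_x)$ (resp. $\lambda_x\in Z(G_x)$) for every $x\in X/G$. Given $G\le S_X$ and $\Lambda=(\lambda_x\in G:x\in X/G)$, $\mathbf R(G,\Lambda)=(X,* )$ is the attempted groupoid defined by setting $L_y=(\lambda_x)^{g_y}$ whenever $x\in X/G$, $y\in xG$ and $g_y$ is any element of $G$ with $xg_y=y$;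 it is well-defined if this does not depend on the choice of $g_y$. *)

theory Defs
  imports "HOL-Algebra.Bij" "HOL-Algebra.Generated_Groups"
begin

text \<open>Permutation groups on X are subgroups G of BijGroup X (extensional bijections
of X). In BijGroup X the product g (x) f is the composition g o f (f applied first),
so the paper's right-action product fg (f first, then g) is g (x) f, and the paper's
conjugate f^g = g^{-1} f g is g (x) f (x) inv g as a map of X.\<close>

definition pconj :: "'a set \<Rightarrow> ('a \<Rightarrow> 'a) \<Rightarrow> ('a \<Rightarrow> 'a) \<Rightarrow> ('a \<Rightarrow> 'a)" where
  "pconj X f g = monoid.mult (BijGroup X) (monoid.mult (BijGroup X) g f) (m_inv (BijGroup X) g)"

definition conj_class :: "'a set \<Rightarrow> ('a \<Rightarrow> 'a) \<Rightarrow> ('a \<Rightarrow> 'a) set \<Rightarrow> ('a \<Rightarrow> 'a) set" where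
  "conj_class X f G = {pconj X f g | g. g \<in> G}"

definition orbit :: "('a \<Rightarrow> 'a) set \<Rightarrow> 'a \<Rightarrow> 'a set" where
  "orbit G x = {g x | g. g \<in> G}"

definition stab :: "('a \<Rightarrow> 'a) set \<Rightarrow> 'a \<Rightarrow> ('a \<Rightarrow> 'a) set" where
  "stab G x = {g \<in> G. g x = x}"

definition centralizer :: "'a set \<Rightarrow> ('a \<Rightarrow> 'a) set \<Rightarrow> ('a \<Rightarrow> 'a) set \<Rightarrow> ('a \<Rightarrow> 'a) set" where
  "centralizer X G H = {g \<in> G. \<forall>h\<in>H. monoid.mult (BijGroup X) g h = monoid.mult (BijGroup X) h g}"

definition center :: "'a set \<Rightarrow> ('a \<Rightarrow> 'a) set \<Rightarrow> ('a \<Rightarrow> 'a) set" where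
  "center X H = centralizer X H H"

definition orbit_reps :: "'a set \<Rightarrow> ('a \<Rightarrow> 'a) set \<Rightarrow> 'a set \<Rightarrow> bool" where
  "orbit_reps X G T \<longleftrightarrow> T \<subseteq> X \<and> (\<forall>y\<in>X. \<exists>!x. x \<in> T \<and> y \<in> orbit G x)"

definition rack_folder :: "'a set \<Rightarrow> ('a \<Rightarrow> 'a) set \<Rightarrow> 'a set \<Rightarrow> ('a \<Rightarrow> ('a \<Rightarrow> 'a)) \<Rightarrow> bool" where
  "rack_folder X G T lam \<longleftrightarrow> (\<forall>x\<in>T. lam x \<in> centralizer X G (stab G x))"

definition quandle_folder :: "'a set \<Rightarrow> ('a \<Rightarrow> 'a) set \<Rightarrow> 'a set \<Rightarrow> ('a \<Rightarrow> ('a \<Rightarrow> 'a)) \<Rightarrow> bool" where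
  "quandle_folder X G T lam \<longleftrightarrow> (\<forall>x\<in>T. lam x \<in> center X (stab G x))"

definition ltrans :: "'a set \<Rightarrow> ('a \<Rightarrow> 'a \<Rightarrow> 'a) \<Rightarrow> 'a \<Rightarrow> ('a \<Rightarrow> 'a)" where
  "ltrans X op x = (\<lambda>y\<in>X. op x y)"

definition left_quasigroup :: "'a set \<Rightarrow> ('a \<Rightarrow> 'a \<Rightarrow> 'a) \<Rightarrow> bool" where
  "left_quasigroup X op \<longleftrightarrow> (\<forall>x\<in>X. \<forall>y\<in>X. op x y \<in> X) \<and> (\<forall>x\<in>X. bij_betw (op x) X X)"

definition rack :: "'a set \<Rightarrow> ('a \<Rightarrow> 'a \<Rightarrow> 'a) \<Rightarrow> bool" where
  "rack X op \<longleftrightarrow> left_quasigroup X op \<and>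
     (\<forall>x\<in>X. \<forall>y\<in>X. \<forall>z\<in>X. op x (op y z) = op (op x y) (op x z))"

definition quandle :: "'a set \<Rightarrow> ('a \<Rightarrow> 'a \<Rightarrow> 'a) \<Rightarrow> bool" where
  "quandle X op \<longleftrightarrow> rack X op \<and> (\<forall>x\<in>X. op x x = x)"

definition LMlt :: "'a set \<Rightarrow> ('a \<Rightarrow> 'a \<Rightarrow> 'a) \<Rightarrow> ('a \<Rightarrow> 'a) set" where
  "LMlt X op = generate (BijGroup X) (ltrans X op ` X)"

text \<open>The construction R(G,Lambda): L_y = (lam x)^{g_y} where x is the representative
of the orbit of y and g_y \<in> G any element with g_y(x) = y. Well-definedness means
independence of the choice of g_y; the operation below uses a (Hilbert-)chosen g_y.\<close>
definition R_welldef :: "'a set \<Rightarrow> ('a \<Rightarrow> 'a) set \<Rightarrow> 'a set \<Rightarrow> ('a \<Rightarrow> ('a \<Rightarrow> 'a)) \<Rightarrow> bool" where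
  "R_welldef X G T lam \<longleftrightarrow>
     (\<forall>x\<in>T. \<forall>g\<in>G. \<forall>h\<in>G. g x = h x \<longrightarrow> pconj X (lam x) g = pconj X (lam x) h)"

definition R_rep :: "('a \<Rightarrow> 'a) set \<Rightarrow> 'a set \<Rightarrow> 'a \<Rightarrow> 'a" where
  "R_rep G T y = (THE x. x \<in> T \<and> y \<in> orbit G x)"

definition R_op :: "'a set \<Rightarrow> ('a \<Rightarrow> 'a) set \<Rightarrow> 'a set \<Rightarrow> ('a \<Rightarrow> ('a \<Rightarrow> 'a)) \<Rightarrow> 'a \<Rightarrow> 'a \<Rightarrow> 'a" where
  "R_op X G T lam y z =
     (let x = R_rep G T y; g = (SOME g. g \<in> G \<and> g x = y) in pconj X (lam x) g z)"

end

theory Submission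
  imports Defs
begin

lemma BG_mult_apply:
  "f \<in> Bij X \<Longrightarrow> g \<in> Bij X \<Longrightarrow> y \<in> X \<Longrightarrow> (f \<otimes>\<^bsub>BijGroup X\<^esub> g) y = f (g y)"
  by (simp add: BijGroup_def compose_def)

lemma BG_one_apply: "y \<in> X \<Longrightarrow> \<one>\<^bsub>BijGroup X\<^esub> y = y"
  by (simp add: BijGroup_def)

lemma BG_carrier: "carrier (BijGroup X) = Bij X" by (simp add: BijGroup_def)

lemma Bij_in: "f \<in> Bij X \<Longrightarrow> y \<in> X \<Longrightarrow> f y \<in> X"
  using Bij_imp_funcset by fast

lemma BG_inv_apply:
  assumes "f \<in> Bij X" "y \<in> X" shows "(inv\<^bsub>BijGroup X\<^esub> f) (f y) = y"
proof -
  interpret B: group "BijGroup X" by (rule group_BijGroup)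
  have "f \<in> carrier (BijGroup X)" using assms BG_carrier by auto
  then have "((inv\<^bsub>BijGroup X\<^esub> f) \<otimes>\<^bsub>BijGroup X\<^esub> f) y = y" using assms BG_one_apply by simp
  then show ?thesis using BG_mult_apply[of "inv\<^bsub>BijGroup X\<^esub> f" X f y] assms
    by (metis BG_carrier B.inv_closed \<open>f \<in> carrier (BijGroup X)\<close>)
qed

lemma Bij_ext: "f \<in> Bij X \<Longrightarrow> g \<in> Bij X \<Longrightarrow> (\<And>y. y \<in> X \<Longrightarrow> f y = g y) \<Longrightarrow> f = g"
  using Bij_imp_extensional extensionalityI by metis

lemma (in group) conj_comm1:
  assumes "h \<in> carrier G" "k \<in> carrier G" "l \<in> carrier G" "k \<otimes> l = l \<otimes> k"
  shows "(h \<otimes> k) \<otimes> l \<otimes> inv (h \<otimes> k) = h \<otimes> l \<otimes> inv h"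
proof -
  have "(h \<otimes> k) \<otimes> l = h \<otimes> (l \<otimes> k)" using assms by (simp add: m_assoc)
  also have "\<dots> = (h \<otimes> l \<otimes> inv h) \<otimes> (h \<otimes> k)"
  proof -
    have "inv h \<otimes> (h \<otimes> k) = k" using assms by (simp add: m_assoc[symmetric])
    then show ?thesis using assms by (simp add: m_assoc)
  qed
  finally show ?thesis using assms by (simp add: inv_solve_right')
qed

lemma (in group) conj_comm2:
  assumes "k \<in> carrier G" "l \<in> carrier G" "k \<otimes> l \<otimes> inv k = l"
  shows "k \<otimes> l = l \<otimes> k"
  using assms by (simp add: inv_solve_right')

lemma (in group) conj_mult:
  assumes "h \<in> carrier G" "k \<in> carrier G" "l \<in> carrier G"
  shows "h \<otimes> (k \<otimes> l \<otimes> inv k) \<otimes> inv h = (h \<otimes> k) \<otimes> l \<otimes> inv (h \<otimes> k)"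
  using assms by (simp add: m_assoc inv_mult_group)

locale Rsetup =
  fixes X :: "'a set" and G :: "('a \<Rightarrow> 'a) set" and T :: "'a set"
    and lam :: "'a \<Rightarrow> ('a \<Rightarrow> 'a)"
  assumes sub: "subgroup G (BijGroup X)"
    and reps: "orbit_reps X G T"
    and lamG: "\<forall>x\<in>T. lam x \<in> G"
begin

abbreviation B where "B \<equiv> BijGroup X"

sublocale B: group B by (rule group_BijGroup)

lemma GB: "g \<in> G \<Longrightarrow> g \<in> carrier B" using subgroup.subset[OF sub] by blast
lemma GBij: "g \<in> G \<Longrightarrow> g \<in> Bij X" using GB BG_carrier by metis
lemma G_one: "\<one>\<^bsub>B\<^esub> \<in> G" by (rule subgroup.one_closed[OF sub])
lemma G_mult: "g \<in> G \<Longrightarrow> h \<in> G \<Longrightarrow> g \<otimes>\<^bsub>B\<^esub> h \<in> G" by (rule subgroup.m_closed[OF sub])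
lemma G_inv: "g \<in> G \<Longrightarrow> inv\<^bsub>B\<^esub> g \<in> G" by (rule subgroup.m_inv_closed[OF sub])
lemma TX: "T \<subseteq> X" using reps unfolding orbit_reps_def by blast

lemma G_apply: "g \<in> G \<Longrightarrow> y \<in> X \<Longrightarrow> g y \<in> X" by (rule Bij_in[OF GBij])

lemma pconj_eq: "pconj X f g = g \<otimes>\<^bsub>B\<^esub> f \<otimes>\<^bsub>B\<^esub> inv\<^bsub>B\<^esub> g" unfolding pconj_def by (rule refl)

definition rep where "rep y = R_rep G T y"
definition gy where "gy y = (SOME g. g \<in> G \<and> g (rep y) = y)"

lemma rep_props: assumes "y \<in> X" shows "rep y \<in> T \<and> y \<in> orbit G (rep y)"
proof -
  have "\<exists>!x. x \<in> T \<and> y \<in> orbit G x" using reps assms unfolding orbit_reps_def by blast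
  then show ?thesis unfolding rep_def R_rep_def by (rule theI')
qed

lemma rep_unique: assumes "y \<in> X" "x \<in> T" "y \<in> orbit G x" shows "rep y = x"
proof -
  have "\<exists>!x. x \<in> T \<and> y \<in> orbit G x" using reps assms(1) unfolding orbit_reps_def by blast
  then show ?thesis unfolding rep_def R_rep_def by (rule the1_equality) (use assms in blast)
qed

lemma rep_T: assumes "x \<in> T" shows "rep x = x"
proof (rule rep_unique)
  show "x \<in> X" using TX assms by blast
  then have "\<one>\<^bsub>B\<^esub> x = x" by (rule BG_one_apply)
  then have "x = \<one>\<^bsub>B\<^esub> x \<and> \<one>\<^bsub>B\<^esub> \<in> G" using G_one by simp
  then show "x \<in> orbit G x" unfolding orbit_def by blast
qed (rule assms)

lemma gy_props: assumes "y \<in> X" shows "gy y \<in> G \<and> gy y (rep y) = y"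
proof -
  have "\<exists>g. g \<in> G \<and> g (rep y) = y" using rep_props[OF assms] by (auto simp: orbit_def)
  then show ?thesis unfolding gy_def by (rule someI_ex)
qed

lemma op_eq: "R_op X G T lam y = pconj X (lam (rep y)) (gy y)"
  by (rule ext) (simp add: R_op_def Let_def rep_def gy_def)

lemma lamB: "x \<in> T \<Longrightarrow> lam x \<in> carrier B" using lamG GB by blast

lemma welldef_iff: "R_welldef X G T lam \<longleftrightarrow> rack_folder X G T lam"
proof
  assume W: "R_welldef X G T lam"
  show "rack_folder X G T lam" unfolding rack_folder_def centralizer_def
  proof (intro ballI CollectI conjI)
    fix x assume x: "x \<in> T"
    show "lam x \<in> G" using lamG x by blast
    fix k assume k: "k \<in> stab G x"
    then have kG: "k \<in> G" and kx: "k x = x" by (auto simp: stab_def)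
    have "x \<in> X" using x TX by blast
    then have e: "k x = \<one>\<^bsub>B\<^esub> x" using kx BG_one_apply by metis
    have W1: "\<forall>g\<in>G. \<forall>h\<in>G. g x = h x \<longrightarrow> pconj X (lam x) g = pconj X (lam x) h"
      using W x unfolding R_welldef_def by (rule bspec)
    have "pconj X (lam x) k = pconj X (lam x) \<one>\<^bsub>B\<^esub>"
      using W1 kG G_one e by blast
    then have "k \<otimes>\<^bsub>B\<^esub> lam x \<otimes>\<^bsub>B\<^esub> inv\<^bsub>B\<^esub> k = lam x"
      using lamB[OF x] by (simp add: pconj_eq)
    then have "k \<otimes>\<^bsub>B\<^esub> lam x = lam x \<otimes>\<^bsub>B\<^esub> k"
      by (rule B.conj_comm2[OF GB[OF kG] lamB[OF x]])
    then show "lam x \<otimes>\<^bsub>B\<^esub> k = k \<otimes>\<^bsub>B\<^esub> lam x" by (rule sym)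
  qed
next
  assume RF: "rack_folder X G T lam"
  show "R_welldef X G T lam" unfolding R_welldef_def
  proof (intro ballI impI)
    fix x g h assume x: "x \<in> T" and g: "g \<in> G" and h: "h \<in> G" and e: "g x = h x"
    have xX: "x \<in> X" using x TX by blast
    define k where "k = inv\<^bsub>B\<^esub> h \<otimes>\<^bsub>B\<^esub> g"
    have kG: "k \<in> G" unfolding k_def by (rule G_mult[OF G_inv[OF h] g])
    have "k x = (inv\<^bsub>B\<^esub> h) (g x)" unfolding k_def
      by (rule BG_mult_apply[OF GBij[OF G_inv[OF h]] GBij[OF g] xX])
    also have "\<dots> = x" unfolding e by (rule BG_inv_apply[OF GBij[OF h] xX])
    finally have "k \<in> stab G x" using kG by (simp add: stab_def)
    moreover have "lam x \<in> centralizer X G (stab G x)"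
      using RF x unfolding rack_folder_def by (rule bspec)
    ultimately have c: "lam x \<otimes>\<^bsub>B\<^esub> k = k \<otimes>\<^bsub>B\<^esub> lam x"
      unfolding centralizer_def by blast
    have gk: "g = h \<otimes>\<^bsub>B\<^esub> k" unfolding k_def using GB[OF g] GB[OF h]
      by (metis B.m_assoc B.r_inv B.l_one B.inv_closed)
    show "pconj X (lam x) g = pconj X (lam x) h"
      unfolding pconj_eq gk by (rule B.conj_comm1[OF GB[OF h] GB[OF kG] lamB[OF x] c[symmetric]])
  qed
qed

end


lemma restrict_Bij: assumes "f \<in> Bij X" shows "(\<lambda>z\<in>X. f z) = f"
proof (rule ext)
  fix z
  have "f \<in> extensional X" using assms by (rule Bij_imp_extensional)
  then show "(\<lambda>z\<in>X. f z) z = f z" by (cases "z \<in> X") (auto simp: extensional_def)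
qed

locale Rwd = Rsetup +
  assumes W: "R_welldef X G T lam"
begin

abbreviation op where "op \<equiv> R_op X G T lam"

lemma W_app: "x \<in> T \<Longrightarrow> g \<in> G \<Longrightarrow> h \<in> G \<Longrightarrow> g x = h x \<Longrightarrow> pconj X (lam x) g = pconj X (lam x) h"
  using W unfolding R_welldef_def by blast

lemma pconj_G: "x \<in> T \<Longrightarrow> g \<in> G \<Longrightarrow> pconj X (lam x) g \<in> G"
  unfolding pconj_eq by (rule G_mult[OF G_mult[OF _ bspec[OF lamG]] G_inv]) auto

lemma op_G: assumes "y \<in> X" shows "op y \<in> G"
  unfolding op_eq using rep_props[OF assms] gy_props[OF assms] pconj_G by blast

lemma op_Bij: "y \<in> X \<Longrightarrow> op y \<in> Bij X" by (rule GBij[OF op_G])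

lemma ltrans_eq: "y \<in> X \<Longrightarrow> ltrans X op y = op y"
  unfolding ltrans_def by (rule restrict_Bij[OF op_Bij])

lemma equiv: assumes h: "h \<in> G" and y: "y \<in> X"
  shows "op (h y) = h \<otimes>\<^bsub>B\<^esub> op y \<otimes>\<^bsub>B\<^esub> inv\<^bsub>B\<^esub> h"
proof -
  define x where "x = rep y"
  define g where "g = gy y"
  have xT: "x \<in> T" using rep_props[OF y] x_def by simp
  have xX: "x \<in> X" using xT TX by blast
  have gG: "g \<in> G" and gx: "g x = y" using gy_props[OF y] x_def g_def by auto
  have hgG: "h \<otimes>\<^bsub>B\<^esub> g \<in> G" by (rule G_mult[OF h gG])
  have hg: "(h \<otimes>\<^bsub>B\<^esub> g) x = h y"
    using BG_mult_apply[OF GBij[OF h] GBij[OF gG] xX] gx by simp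
  have hyX: "h y \<in> X" by (rule G_apply[OF h y])
  have "h y = (h \<otimes>\<^bsub>B\<^esub> g) x \<and> h \<otimes>\<^bsub>B\<^esub> g \<in> G" using hgG hg by simp
  then have "h y \<in> orbit G x" unfolding orbit_def by blast
  then have r: "rep (h y) = x" by (rule rep_unique[OF hyX xT])
  have g2: "gy (h y) \<in> G" "gy (h y) x = h y" using gy_props[OF hyX] r by auto
  have "op (h y) = pconj X (lam x) (gy (h y))" unfolding op_eq r ..
  also have "\<dots> = pconj X (lam x) (h \<otimes>\<^bsub>B\<^esub> g)"
    by (rule W_app[OF xT g2(1) hgG]) (simp add: g2(2) hg)
  also have "\<dots> = h \<otimes>\<^bsub>B\<^esub> pconj X (lam x) g \<otimes>\<^bsub>B\<^esub> inv\<^bsub>B\<^esub> h"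
    unfolding pconj_eq by (rule B.conj_mult[OF GB[OF h] GB[OF gG] lamB[OF xT], symmetric])
  also have "pconj X (lam x) g = op y" unfolding op_eq x_def g_def ..
  finally show ?thesis .
qed

lemma op_T: assumes x: "x \<in> T" shows "op x = lam x"
proof -
  have xX: "x \<in> X" using x TX by blast
  have r: "rep x = x" by (rule rep_T[OF x])
  have g: "gy x \<in> G" "gy x x = x" using gy_props[OF xX] r by auto
  have "op x = pconj X (lam x) (gy x)" unfolding op_eq r ..
  also have "\<dots> = pconj X (lam x) \<one>\<^bsub>B\<^esub>"
    by (rule W_app[OF x g(1) G_one]) (simp add: g(2) BG_one_apply[OF xX])
  also have "\<dots> = lam x" unfolding pconj_eq using lamB[OF x] by simp
  finally show ?thesis .
qed

lemma conj_op: assumes x: "x \<in> T" and g: "g \<in> G" shows "pconj X (lam x) g = op (g x)"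
proof -
  have xX: "x \<in> X" using x TX by blast
  show ?thesis unfolding equiv[OF g xX] op_T[OF x] pconj_eq ..
qed

lemma is_rack: "rack X op"
  unfolding rack_def left_quasigroup_def
proof (intro conjI ballI)
  fix x y assume x: "x \<in> X" and y: "y \<in> X"
  show "op x y \<in> X" by (rule Bij_in[OF op_Bij[OF x] y])
next
  fix x assume x: "x \<in> X"
  show "bij_betw (op x) X X" using op_Bij[OF x] unfolding Bij_def by blast
next
  fix x y z assume x: "x \<in> X" and y: "y \<in> X" and z: "z \<in> X"
  have a: "op x \<in> G" by (rule op_G[OF x])
  have aB: "op x \<in> Bij X" "inv\<^bsub>B\<^esub> (op x) \<in> Bij X" "op y \<in> Bij X"
    using GBij a G_inv op_Bij y by auto
  have xz: "op x z \<in> X" by (rule Bij_in[OF aB(1) z])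
  have "op (op x y) = op x \<otimes>\<^bsub>B\<^esub> op y \<otimes>\<^bsub>B\<^esub> inv\<^bsub>B\<^esub> (op x)"
    by (rule equiv[OF a y])
  then have "op (op x y) (op x z) = (op x \<otimes>\<^bsub>B\<^esub> op y) ((inv\<^bsub>B\<^esub> (op x)) (op x z))"
    using BG_mult_apply[OF _ aB(2) xz] B.m_closed aB BG_carrier by (metis)
  also have "(inv\<^bsub>B\<^esub> (op x)) (op x z) = z" by (rule BG_inv_apply[OF aB(1) z])
  also have "(op x \<otimes>\<^bsub>B\<^esub> op y) z = op x (op y z)" by (rule BG_mult_apply[OF aB(1) aB(3) z])
  finally show "op x (op y z) = op (op x y) (op x z)" by (rule sym)
qed

lemma ltrans_img: "ltrans X op ` X = (\<Union>x\<in>T. conj_class X (lam x) G)"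
proof (intro equalityI subsetI)
  fix f assume "f \<in> ltrans X op ` X"
  then obtain y where y: "y \<in> X" and f: "f = ltrans X op y" by blast
  have "f = pconj X (lam (rep y)) (gy y)" using f ltrans_eq[OF y] op_eq by simp
  then show "f \<in> (\<Union>x\<in>T. conj_class X (lam x) G)"
    unfolding conj_class_def using rep_props[OF y] gy_props[OF y] by blast
next
  fix f assume "f \<in> (\<Union>x\<in>T. conj_class X (lam x) G)"
  then obtain x g where x: "x \<in> T" and g: "g \<in> G" and f: "f = pconj X (lam x) g"
    unfolding conj_class_def by blast
  have xX: "x \<in> X" using x TX by blast
  have gx: "g x \<in> X" by (rule G_apply[OF g xX])
  have "f = ltrans X op (g x)" unfolding f conj_op[OF x g] ltrans_eq[OF gx] ..
  then show "f \<in> ltrans X op ` X" using gx by blast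
qed

lemma LMlt_eq: "LMlt X op = generate B (\<Union>x\<in>T. conj_class X (lam x) G)"
  unfolding LMlt_def ltrans_img ..

lemma LMlt_sub: "LMlt X op \<subseteq> G"
  unfolding LMlt_def
proof (rule B.generate_subgroup_incl[OF _ sub])
  show "ltrans X op ` X \<subseteq> G" using ltrans_eq op_G by auto
qed

lemma op_idem: assumes y: "y \<in> X" and fx: "\<forall>x\<in>T. lam x x = x" shows "op y y = y"
proof -
  define x where "x = rep y"
  define g where "g = gy y"
  have xT: "x \<in> T" using rep_props[OF y] x_def by simp
  have xX: "x \<in> X" using xT TX by blast
  have gG: "g \<in> G" and gx: "g x = y" using gy_props[OF y] x_def g_def by auto
  have lB: "lam x \<in> Bij X" using lamB[OF xT] BG_carrier by blast
  have gB: "g \<in> Bij X" "inv\<^bsub>B\<^esub> g \<in> Bij X" using GBij gG G_inv by auto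
  have ig: "(inv\<^bsub>B\<^esub> g) y = x" using BG_inv_apply[OF gB(1) xX] gx by simp
  have "op y y = (g \<otimes>\<^bsub>B\<^esub> lam x \<otimes>\<^bsub>B\<^esub> inv\<^bsub>B\<^esub> g) y"
    unfolding op_eq pconj_eq x_def g_def ..
  also have "\<dots> = (g \<otimes>\<^bsub>B\<^esub> lam x) ((inv\<^bsub>B\<^esub> g) y)"
    using BG_mult_apply[OF _ gB(2) y] B.m_closed gB lB BG_carrier by metis
  also have "\<dots> = g (lam x x)" unfolding ig by (rule BG_mult_apply[OF gB(1) lB xX])
  also have "\<dots> = y" using fx xT gx by simp
  finally show ?thesis .
qed

end

theorem proposition3p3:
  fixes X :: "'a set" and G :: "('a \<Rightarrow> 'a) set" and T :: "'a set"
    and lam :: "'a \<Rightarrow> ('a \<Rightarrow> 'a)"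
  assumes "X \<noteq> {}"
    and "subgroup G (BijGroup X)"
    and "orbit_reps X G T"
    and "\<forall>x\<in>T. lam x \<in> G"
  shows "(R_welldef X G T lam \<longleftrightarrow> rack_folder X G T lam)
     \<and> (rack_folder X G T lam \<longrightarrow>
          rack X (R_op X G T lam)
          \<and> (\<forall>x\<in>T. ltrans X (R_op X G T lam) x = lam x)
          \<and> LMlt X (R_op X G T lam) = generate (BijGroup X) (\<Union>x\<in>T. conj_class X (lam x) G)
          \<and> LMlt X (R_op X G T lam) \<subseteq> G)
     \<and> ((R_welldef X G T lam \<and> quandle X (R_op X G T lam)) \<longleftrightarrow> quandle_folder X G T lam)"
proof -
  interpret S: Rsetup X G T lam by (rule Rsetup.intro[OF assms(2-4)])
  have part2: "rack X (R_op X G T lam)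
          \<and> (\<forall>x\<in>T. ltrans X (R_op X G T lam) x = lam x)
          \<and> LMlt X (R_op X G T lam) = generate (BijGroup X) (\<Union>x\<in>T. conj_class X (lam x) G)
          \<and> LMlt X (R_op X G T lam) \<subseteq> G" if W: "R_welldef X G T lam"
  proof -
    interpret R: Rwd X G T lam by (rule Rwd.intro[OF Rsetup.intro[OF assms(2-4)] Rwd_axioms.intro]) (use W in blast)
    have "\<forall>x\<in>T. ltrans X (R_op X G T lam) x = lam x"
    proof
      fix x assume x: "x \<in> T"
      then have "x \<in> X" using S.TX by blast
      then show "ltrans X (R_op X G T lam) x = lam x" using R.ltrans_eq R.op_T[OF x] by simp
    qed
    then show ?thesis using R.is_rack R.LMlt_eq R.LMlt_sub by blast
  qed
  have part3: "(R_welldef X G T lam \<and> quandle X (R_op X G T lam)) \<longleftrightarrow> quandle_folder X G T lam"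
  proof
    assume A: "R_welldef X G T lam \<and> quandle X (R_op X G T lam)"
    interpret R: Rwd X G T lam by (rule Rwd.intro[OF Rsetup.intro[OF assms(2-4)] Rwd_axioms.intro]) (use A in blast)
    have RF: "rack_folder X G T lam" using A S.welldef_iff by blast
    show "quandle_folder X G T lam" unfolding quandle_folder_def center_def
    proof
      fix x assume x: "x \<in> T"
      have xX: "x \<in> X" using x S.TX by blast
      have "R_op X G T lam x x = x" using A xX unfolding quandle_def by blast
      then have lx: "lam x x = x" using R.op_T[OF x] by simp
      have lG: "lam x \<in> G" using assms(4) x by blast
      have st: "lam x \<in> stab G x" unfolding stab_def using lx lG by blast
      have "lam x \<in> centralizer X G (stab G x)" using RF x unfolding rack_folder_def by blast
      then show "lam x \<in> centralizer X (stab G x) (stab G x)"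
        using st unfolding centralizer_def by blast
    qed
  next
    assume Q: "quandle_folder X G T lam"
    have RF: "rack_folder X G T lam" unfolding rack_folder_def
    proof
      fix x assume x: "x \<in> T"
      have "lam x \<in> centralizer X (stab G x) (stab G x)"
        using Q x unfolding quandle_folder_def center_def by blast
      then show "lam x \<in> centralizer X G (stab G x)"
        unfolding centralizer_def stab_def by blast
    qed
    have W: "R_welldef X G T lam" using RF S.welldef_iff by blast
    interpret R: Rwd X G T lam by (rule Rwd.intro[OF Rsetup.intro[OF assms(2-4)] Rwd_axioms.intro]) (use W in blast)
    have fx: "\<forall>x\<in>T. lam x x = x"
    proof
      fix x assume x: "x \<in> T"
      have "lam x \<in> centralizer X (stab G x) (stab G x)"
        using Q x unfolding quandle_folder_def center_def by blast
      then show "lam x x = x" unfolding centralizer_def stab_def by blast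
    qed
    have "quandle X (R_op X G T lam)"
      unfolding quandle_def using R.is_rack R.op_idem fx by blast
    then show "R_welldef X G T lam \<and> quandle X (R_op X G T lam)" using W by blast
  qed
  show ?thesis using S.welldef_iff part2 part3 by blast
qed

end
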